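(* Consider the binary random graph affiliation mixture model with $Q\ge 2$ groups, on $Q+1$ nodes. Let $$U_Q(X)=\mathbb E\Big(\prod_{1\le i<j\le Q+1}(X-X_{ij})\Big),$$ a univariate polynomial of degree $\binom{Q+1}2$ in an indeterminate $X$ (expectation taken coefficientwise), and $$V_Q(X,Y)=\mathbb E\Big(\Big(X+(Q-1)Y-\sum_{1\le i\le Q}X_{i(Q+1)}\Big)\prod_{1\le i<j\le Q}(X-X_{ij})\Big),$$ of degree $\binom Q2+1$ in $X$ and degree $1$ in $Y$. Then $U_Q(\alpha)=0$ (so $\alpha$ is a real root of $U_Q$), $V_Q(\alpha,\beta)=0$, and the coefficient of $Y$ in $V_Q(\alpha,Y)$ is non-zero if and only if $\alpha\ne\beta$.
   Context: Random graph mixture model: nodes have i.i.d. latent groups $Z_i\in\{1,\dots,Q\}$ with $\pi_q=\mathbb P(Z_i=q)\in(0,1)$, $\sum_q\pi_q=1$; edge variables $X_{ij}$ ($i<j$) are conditionally independent given all $Z$'s, with law of $X_{ij}$ depending only on $(Z_i,Z_j)$. Binary affiliation model: $X_{ij}\in\{0,1\}$ with $\mathbb P(X_{ij}=1\mid Z_i=q,Z_j=l)=\alpha$ if $q=l$ and $=\beta$ if $q\ne l$. *)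

theory Defs
  imports "HOL-Computational_Algebra.Polynomial" "HOL-Library.FuncSet"
begin

text \<open>Nodes are 1..n, groups are 1..Q. Edge variables are indexed by pairs (i,j) with
  1 \<le> i < j \<le> n.\<close>

definition aff_edges :: "nat \<Rightarrow> (nat \<times> nat) set" where
  "aff_edges n = {(i, j). 1 \<le> i \<and> i < j \<and> j \<le> n}"

text \<open>Joint probability of the latent assignment z and the edge configuration x in the
  binary affiliation model: P(Z = z) * P(X = x | Z = z).\<close>

definition aff_weight ::
  "nat \<Rightarrow> (nat \<Rightarrow> real) \<Rightarrow> real \<Rightarrow> real \<Rightarrow> (nat \<Rightarrow> nat) \<Rightarrow> (nat \<times> nat \<Rightarrow> real) \<Rightarrow> real" where
  "aff_weight n \<pi> \<alpha> \<beta> z x =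
     (\<Prod>i\<in>{1..n}. \<pi> (z i)) *
     (\<Prod>e\<in>aff_edges n.
        (let p = (if z (fst e) = z (snd e) then \<alpha> else \<beta>)
         in if x e = 1 then p else 1 - p))"

text \<open>Expectation of a function f of the edge variables (values in a ring 'b into which the
  reals embed via emb; used coefficientwise for polynomials).\<close>

definition aff_expect ::
  "nat \<Rightarrow> nat \<Rightarrow> (nat \<Rightarrow> real) \<Rightarrow> real \<Rightarrow> real \<Rightarrow> (real \<Rightarrow> 'b::comm_ring_1)
     \<Rightarrow> ((nat \<times> nat \<Rightarrow> real) \<Rightarrow> 'b) \<Rightarrow> 'b" where
  "aff_expect Q n \<pi> \<alpha> \<beta> emb f =
     (\<Sum>z\<in>{1..n} \<rightarrow>\<^sub>E {1..Q}. \<Sum>x\<in>aff_edges n \<rightarrow>\<^sub>E {0, 1}.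
        emb (aff_weight n \<pi> \<alpha> \<beta> z x) * f x)"

definition U_poly :: "nat \<Rightarrow> (nat \<Rightarrow> real) \<Rightarrow> real \<Rightarrow> real \<Rightarrow> real poly" where
  "U_poly Q \<pi> \<alpha> \<beta> =
     aff_expect Q (Q + 1) \<pi> \<alpha> \<beta> (\<lambda>r. [:r:])
       (\<lambda>x. \<Prod>e\<in>aff_edges (Q + 1). [:- x e, 1:])"

text \<open>V_Q(X,Y) as a polynomial in X whose coefficients are real polynomials in Y:
  E((X + (Q-1) Y - sum_{i \<le> Q} X_{i,Q+1}) prod_{1 \<le> i<j \<le> Q} (X - X_ij)).\<close>

definition V_poly :: "nat \<Rightarrow> (nat \<Rightarrow> real) \<Rightarrow> real \<Rightarrow> real \<Rightarrow> real poly poly" where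
  "V_poly Q \<pi> \<alpha> \<beta> =
     aff_expect Q (Q + 1) \<pi> \<alpha> \<beta> (\<lambda>r. [:[:r:]:])
       (\<lambda>x. [: [: - (\<Sum>i=1..Q. x (i, Q + 1)), real Q - 1 :], 1 :] *
            (\<Prod>e\<in>aff_edges Q. [: [: - x e :], 1 :]))"

definition V_at :: "real poly poly \<Rightarrow> real \<Rightarrow> real poly" where
  "V_at V a = poly V [:a:]"

end

theory Submission
  imports Defs
begin

lemma const_prod: "(\<Prod>e\<in>A. [:f e:]) = [:\<Prod>e\<in>A. f e:]"
  by (induction A rule: infinite_finite_induct) (auto simp: mult.commute)

definition pz :: "real \<Rightarrow> real \<Rightarrow> (nat \<Rightarrow> nat) \<Rightarrow> nat \<times> nat \<Rightarrow> real" where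
  "pz a b z e = (if z (fst e) = z (snd e) then a else b)"

lemma finite_edges: "finite (aff_edges n)"
proof -
  have "aff_edges n \<subseteq> {1..n} \<times> {1..n}" by (auto simp: aff_edges_def)
  thus ?thesis by (rule finite_subset) simp
qed

lemma weight_eq: "aff_weight n \<pi> a b z x = (\<Prod>i\<in>{1..n}. \<pi> (z i)) *
   (\<Prod>e\<in>aff_edges n. (if x e = 1 then pz a b z e else 1 - pz a b z e))"
  unfolding aff_weight_def pz_def Let_def by simp

lemma inner:
  fixes p :: "'e \<Rightarrow> real" and h :: "'e \<Rightarrow> real \<Rightarrow> real"
  assumes "finite D"
  shows "(\<Sum>x\<in>D \<rightarrow>\<^sub>E {0,1::real}. (\<Prod>e\<in>D. (if x e = 1 then p e else 1 - p e)) * (\<Prod>e\<in>D. h e (x e)))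
     = (\<Prod>e\<in>D. (1 - p e) * h e 0 + p e * h e 1)"
proof -
  have "(\<Prod>e\<in>D. (1 - p e) * h e 0 + p e * h e 1) = (\<Prod>e\<in>D. \<Sum>s\<in>{0,1::real}. (if s = 1 then p e else 1 - p e) * h e s)"
    by simp
  also have "\<dots> = (\<Sum>x\<in>D \<rightarrow>\<^sub>E {0,1::real}. \<Prod>e\<in>D. (if x e = 1 then p e else 1 - p e) * h e (x e))"
    by (rule prod_sum_PiE) (use assms in auto)
  also have "\<dots> = (\<Sum>x\<in>D \<rightarrow>\<^sub>E {0,1::real}. (\<Prod>e\<in>D. (if x e = 1 then p e else 1 - p e)) * (\<Prod>e\<in>D. h e (x e)))"
    by (simp add: prod.distrib)
  finally show ?thesis by simp
qed

lemma inner_z: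
  "(\<Sum>x\<in>aff_edges n \<rightarrow>\<^sub>E {0,1}. aff_weight n \<pi> a b z x * (\<Prod>e\<in>aff_edges n. h e (x e)))
   = (\<Prod>i\<in>{1..n}. \<pi> (z i)) * (\<Prod>e\<in>aff_edges n. (1 - pz a b z e) * h e 0 + pz a b z e * h e 1)"
proof -
  have "(\<Sum>x\<in>aff_edges n \<rightarrow>\<^sub>E {0,1}. aff_weight n \<pi> a b z x * (\<Prod>e\<in>aff_edges n. h e (x e)))
     = (\<Prod>i\<in>{1..n}. \<pi> (z i)) * (\<Sum>x\<in>aff_edges n \<rightarrow>\<^sub>E {0,1::real}. (\<Prod>e\<in>aff_edges n. (if x e = 1 then pz a b z e else 1 - pz a b z e)) * (\<Prod>e\<in>aff_edges n. h e (x e)))"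
    by (simp add: weight_eq sum_distrib_left mult.assoc)
  also have "\<dots> = (\<Prod>i\<in>{1..n}. \<pi> (z i)) * (\<Prod>e\<in>aff_edges n. (1 - pz a b z e) * h e 0 + pz a b z e * h e 1)"
    using inner[OF finite_edges] by simp
  finally show ?thesis .
qed

lemma pigeon:
  assumes "z \<in> {1..Q+1} \<rightarrow>\<^sub>E {1..Q}"
  shows "\<exists>e\<in>aff_edges (Q+1). z (fst e) = z (snd e)"
proof -
  have "\<not> inj_on z {1..Q+1}"
  proof
    assume "inj_on z {1..Q+1}"
    hence "card (z ` {1..Q+1}) = Q + 1" by (simp add: card_image)
    moreover have "z ` {1..Q+1} \<subseteq> {1..Q}" using assms by (auto simp: PiE_iff)
    hence "card (z ` {1..Q+1}) \<le> Q" using card_mono[of "{1..Q}"] by fastforce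
    ultimately show False by simp
  qed
  then obtain i j where ij: "i \<in> {1..Q+1}" "j \<in> {1..Q+1}" "i \<noteq> j" "z i = z j"
    unfolding inj_on_def by blast
  show ?thesis
  proof (cases "i < j")
    case True thus ?thesis using ij by (intro bexI[of _ "(i,j)"]) (auto simp: aff_edges_def)
  next
    case False thus ?thesis using ij by (intro bexI[of _ "(j,i)"]) (auto simp: aff_edges_def)
  qed
qed

lemma T0_inj:
  assumes "(\<Prod>e\<in>aff_edges Q. a - pz a b z e) \<noteq> 0"
  shows "inj_on z {1..Q}"
proof (rule inj_onI, rule ccontr)
  fix i j assume h: "i \<in> {1..Q}" "j \<in> {1..Q}" "z i = z j" "i \<noteq> j"
  have "\<exists>e\<in>aff_edges Q. a - pz a b z e = 0"
  proof (cases "i < j")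
    case True
    have "(i,j) \<in> aff_edges Q" using h True by (auto simp: aff_edges_def)
    moreover have "a - pz a b z (i,j) = 0" using h by (simp add: pz_def)
    ultimately show ?thesis by blast
  next
    case False
    hence "j < i" using h by simp
    hence "(j,i) \<in> aff_edges Q" using h by (auto simp: aff_edges_def)
    moreover have "a - pz a b z (j,i) = 0" using h by (simp add: pz_def)
    ultimately show ?thesis by blast
  qed
  hence "(\<Prod>e\<in>aff_edges Q. a - pz a b z e) = 0"
    by (simp add: prod_zero_iff[OF finite_edges])
  thus False using assms by simp
qed

lemma T0_val:
  "(\<Prod>e\<in>aff_edges Q. a - pz a b z e) = (if inj_on z {1..Q} then (a - b) ^ card (aff_edges Q) else 0)"
proof (cases "inj_on z {1..Q}")
  case True
  have "(\<Prod>e\<in>aff_edges Q. a - pz a b z e) = (\<Prod>e\<in>aff_edges Q. a - b)"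
  proof (rule prod.cong)
    fix e assume "e \<in> aff_edges Q"
    then obtain i j where e: "e = (i,j)" "i \<in> {1..Q}" "j \<in> {1..Q}" "i \<noteq> j"
      by (auto simp: aff_edges_def)
    hence "z i \<noteq> z j" using True inj_onD by metis
    thus "a - pz a b z e = a - b" using e by (simp add: pz_def)
  qed simp
  thus ?thesis using True by simp
next
  case False thus ?thesis using T0_inj by metis
qed

lemma U_eval: "poly (U_poly Q \<pi> \<alpha> \<beta>) \<alpha> = (\<Sum>z\<in>{1..Q+1} \<rightarrow>\<^sub>E {1..Q}. \<Sum>x\<in>aff_edges (Q+1) \<rightarrow>\<^sub>E {0,1}. aff_weight (Q+1) \<pi> \<alpha> \<beta> z x * (\<Prod>e\<in>aff_edges (Q+1). \<alpha> - x e))"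
  by (simp add: U_poly_def aff_expect_def poly_sum poly_prod)

lemma V_eval: "poly (V_at (V_poly Q \<pi> \<alpha> \<beta>) \<alpha>) \<beta> = (\<Sum>z\<in>{1..Q+1} \<rightarrow>\<^sub>E {1..Q}. \<Sum>x\<in>aff_edges (Q+1) \<rightarrow>\<^sub>E {0,1}. aff_weight (Q+1) \<pi> \<alpha> \<beta> z x * ((\<alpha> + (real Q - 1)*\<beta> - (\<Sum>i=1..Q. x (i,Q+1))) * (\<Prod>e\<in>aff_edges Q. \<alpha> - x e)))"
  by (simp add: V_at_def V_poly_def aff_expect_def poly_sum poly_prod const_prod algebra_simps)

lemma C_eval: "coeff (V_at (V_poly Q \<pi> \<alpha> \<beta>) \<alpha>) 1 = (\<Sum>z\<in>{1..Q+1} \<rightarrow>\<^sub>E {1..Q}. \<Sum>x\<in>aff_edges (Q+1) \<rightarrow>\<^sub>E {0,1}. aff_weight (Q+1) \<pi> \<alpha> \<beta> z x * ((real Q - 1) * (\<Prod>e\<in>aff_edges Q. \<alpha> - x e)))"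
  by (simp add: V_at_def V_poly_def aff_expect_def poly_sum poly_prod const_prod coeff_sum algebra_simps)

theorem proposition1:
  fixes Q :: nat and \<pi> :: "nat \<Rightarrow> real" and \<alpha> \<beta> :: real
  assumes "Q \<ge> 2"
    and "\<forall>q\<in>{1..Q}. 0 < \<pi> q \<and> \<pi> q < 1"
    and "(\<Sum>q=1..Q. \<pi> q) = 1"
    and "0 \<le> \<alpha>" "\<alpha> \<le> 1" "0 \<le> \<beta>" "\<beta> \<le> 1"
  shows "poly (U_poly Q \<pi> \<alpha> \<beta>) \<alpha> = 0
       \<and> poly (V_at (V_poly Q \<pi> \<alpha> \<beta>) \<alpha>) \<beta> = 0
       \<and> (coeff (V_at (V_poly Q \<pi> \<alpha> \<beta>) \<alpha>) 1 \<noteq> 0 \<longleftrightarrow> \<alpha> \<noteq> \<beta>)"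
proof -
  let ?Z = "{1..Q+1} \<rightarrow>\<^sub>E {1..Q}"
  let ?D = "aff_edges (Q+1)"
  let ?E = "aff_edges Q"
  let ?X = "aff_edges (Q+1) \<rightarrow>\<^sub>E {0,1::real}"
  let ?w = "aff_weight (Q+1) \<pi> \<alpha> \<beta>"
  define Pi where "Pi z = (\<Prod>i\<in>{1..Q+1}. \<pi> (z i))" for z
  define T0 where "T0 z = (\<Prod>e\<in>?E. \<alpha> - pz \<alpha> \<beta> z e)" for z
  define P where "P x = (\<Prod>e\<in>?E. \<alpha> - x e)" for x :: "nat\<times>nat \<Rightarrow> real"
  define h0 where "h0 e s = (if e \<in> ?E then \<alpha> - s else 1)" for e and s :: real
  have Esub: "?E \<subseteq> ?D" by (auto simp: aff_edges_def)
  have finD: "finite ?D" by (rule finite_edges)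
  have DE: "?D \<inter> ?E = ?E" using Esub by blast
  have P_eq: "P x = (\<Prod>e\<in>?D. h0 e (x e))" for x
  proof -
    have "(\<Prod>e\<in>?D. h0 e (x e)) = (\<Prod>e\<in>?D \<inter> ?E. \<alpha> - x e)"
      unfolding h0_def by (rule prod.inter_restrict[OF finD, symmetric])
    thus ?thesis by (simp only: P_def DE)
  qed
  have fac0: "(\<Prod>e\<in>?D. (1 - pz \<alpha> \<beta> z e) * h0 e 0 + pz \<alpha> \<beta> z e * h0 e 1) = T0 z" for z
  proof -
    have "(\<Prod>e\<in>?D. (1 - pz \<alpha> \<beta> z e) * h0 e 0 + pz \<alpha> \<beta> z e * h0 e 1) = (\<Prod>e\<in>?D. if e \<in> ?E then \<alpha> - pz \<alpha> \<beta> z e else 1)"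
      by (rule prod.cong) (auto simp: h0_def algebra_simps)
    also have "\<dots> = (\<Prod>e\<in>?D \<inter> ?E. \<alpha> - pz \<alpha> \<beta> z e)" by (rule prod.inter_restrict[OF finD, symmetric])
    finally show ?thesis by (simp only: T0_def DE)
  qed
  have I0: "(\<Sum>x\<in>?X. ?w z x * P x) = Pi z * T0 z" for z
    unfolding P_eq Pi_def fac0[symmetric] by (rule inner_z)
  have Ii: "(\<Sum>x\<in>?X. ?w z x * (x (i,Q+1) * P x)) = Pi z * (pz \<alpha> \<beta> z (i,Q+1) * T0 z)"
    if i: "i \<in> {1..Q}" for z i
  proof -
    define hi where "hi e s = (if e = (i,Q+1) then s else 1) * h0 e s" for e and s :: real
    have e0D: "(i,Q+1) \<in> ?D" using i by (auto simp: aff_edges_def)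
    have e0E: "(i,Q+1) \<notin> ?E" by (auto simp: aff_edges_def)
    have 1: "x (i,Q+1) * P x = (\<Prod>e\<in>?D. hi e (x e))" for x
      by (simp add: hi_def prod.distrib P_eq finite_edges e0D[simplified])
    have 2: "(\<Prod>e\<in>?D. (1 - pz \<alpha> \<beta> z e) * hi e 0 + pz \<alpha> \<beta> z e * hi e 1) = pz \<alpha> \<beta> z (i,Q+1) * T0 z"
    proof -
      have "(\<Prod>e\<in>?D. (1 - pz \<alpha> \<beta> z e) * hi e 0 + pz \<alpha> \<beta> z e * hi e 1) = (\<Prod>e\<in>?D. (if e = (i,Q+1) then pz \<alpha> \<beta> z e else 1) * ((1 - pz \<alpha> \<beta> z e) * h0 e 0 + pz \<alpha> \<beta> z e * h0 e 1))"
        by (rule prod.cong) (auto simp: hi_def h0_def e0E[simplified] algebra_simps)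
      also have "\<dots> = pz \<alpha> \<beta> z (i,Q+1) * T0 z"
        by (simp add: prod.distrib finite_edges e0D[simplified] fac0[simplified])
      finally show ?thesis .
    qed
    show ?thesis unfolding 1 2[symmetric] Pi_def by (rule inner_z)
  qed
  have U0: "poly (U_poly Q \<pi> \<alpha> \<beta>) \<alpha> = 0"
  proof -
    have "(\<Sum>x\<in>?X. ?w z x * (\<Prod>e\<in>?D. \<alpha> - x e)) = 0" if z: "z \<in> ?Z" for z
    proof -
      have "(\<Sum>x\<in>?X. ?w z x * (\<Prod>e\<in>?D. \<alpha> - x e)) = Pi z * (\<Prod>e\<in>?D. (1 - pz \<alpha> \<beta> z e) * (\<alpha> - 0) + pz \<alpha> \<beta> z e * (\<alpha> - 1))"
        using inner_z[of "Q+1" \<pi> \<alpha> \<beta> z "\<lambda>e s. \<alpha> - s"] unfolding Pi_def .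
      moreover obtain e where e: "e \<in> ?D" "z (fst e) = z (snd e)" using pigeon[OF z] by blast
      have "(1 - pz \<alpha> \<beta> z e) * (\<alpha> - 0) + pz \<alpha> \<beta> z e * (\<alpha> - 1) = 0"
        using e by (simp add: pz_def algebra_simps)
      hence "(\<Prod>e\<in>?D. (1 - pz \<alpha> \<beta> z e) * (\<alpha> - 0) + pz \<alpha> \<beta> z e * (\<alpha> - 1)) = 0"
        using e(1) by (intro prod_zero[OF finD]) blast
      ultimately show ?thesis by simp
    qed
    thus ?thesis unfolding U_eval by simp
  qed
  define c where "c = \<alpha> + (real Q - 1) * \<beta>"
  have keysum: "(\<Sum>i=1..Q. pz \<alpha> \<beta> z (i,Q+1)) = c" if z: "z \<in> ?Z" and inj: "inj_on z {1..Q}" for z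
  proof -
    have sub: "z ` {1..Q} \<subseteq> {1..Q}" using z by (auto simp: PiE_iff)
    have "card (z ` {1..Q}) = card {1..Q}" using inj by (simp add: card_image)
    hence im: "z ` {1..Q} = {1..Q}" using sub by (intro card_subset_eq) auto
    have "z (Q+1) \<in> {1..Q}" using z by (auto simp: PiE_iff)
    hence "z (Q+1) \<in> z ` {1..Q}" using im by simp
    then obtain k where k: "k \<in> {1..Q}" "z (Q+1) = z k" by blast
    have "(\<Sum>i=1..Q. pz \<alpha> \<beta> z (i,Q+1)) = pz \<alpha> \<beta> z (k,Q+1) + (\<Sum>i\<in>{1..Q}-{k}. pz \<alpha> \<beta> z (i,Q+1))"
      using k by (simp add: sum.remove)
    also have "(\<Sum>i\<in>{1..Q}-{k}. pz \<alpha> \<beta> z (i,Q+1)) = (\<Sum>i\<in>{1..Q}-{k}. \<beta>)"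
    proof (rule sum.cong[OF refl])
      fix i assume i: "i \<in> {1..Q}-{k}"
      hence "z i \<noteq> z k" using inj k inj_onD by (metis DiffE insertI1)
      thus "pz \<alpha> \<beta> z (i,Q+1) = \<beta>" using k by (simp add: pz_def)
    qed
    also have "\<dots> = (real Q - 1)*\<beta>" using k by (simp add: of_nat_diff)
    finally show ?thesis using k by (simp add: pz_def c_def)
  qed
  have V0: "poly (V_at (V_poly Q \<pi> \<alpha> \<beta>) \<alpha>) \<beta> = 0"
  proof -
    have "(\<Sum>x\<in>?X. ?w z x * ((c - (\<Sum>i=1..Q. x (i,Q+1))) * P x)) = 0" if z: "z \<in> ?Z" for z
    proof -
      have "(\<Sum>x\<in>?X. ?w z x * ((c - (\<Sum>i=1..Q. x (i,Q+1))) * P x))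
          = (\<Sum>x\<in>?X. c * (?w z x * P x) - (\<Sum>i=1..Q. ?w z x * (x (i,Q+1) * P x)))"
        by (rule sum.cong[OF refl]) (simp add: sum_distrib_left sum_distrib_right algebra_simps)
      also have "\<dots> = c * (\<Sum>x\<in>?X. ?w z x * P x) - (\<Sum>i=1..Q. \<Sum>x\<in>?X. ?w z x * (x (i,Q+1) * P x))"
        by (simp add: sum_subtractf sum_distrib_left) (rule sum.swap)
      also have S: "(\<Sum>i=1..Q. \<Sum>x\<in>?X. ?w z x * (x (i,Q+1) * P x)) = (\<Sum>i=1..Q. Pi z * (pz \<alpha> \<beta> z (i,Q+1) * T0 z))"
        by (rule sum.cong[OF refl]) (rule Ii, simp)
      also have "c * (\<Sum>x\<in>?X. ?w z x * P x) = c * (Pi z * T0 z)" by (simp only: I0)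
      also have "c * (Pi z * T0 z) - (\<Sum>i=1..Q. Pi z * (pz \<alpha> \<beta> z (i,Q+1) * T0 z)) = Pi z * T0 z * (c - (\<Sum>i=1..Q. pz \<alpha> \<beta> z (i,Q+1)))"
        by (simp add: sum_distrib_left algebra_simps)
      finally have eq: "(\<Sum>x\<in>?X. ?w z x * ((c - (\<Sum>i=1..Q. x (i,Q+1))) * P x)) = Pi z * T0 z * (c - (\<Sum>i=1..Q. pz \<alpha> \<beta> z (i,Q+1)))" .
      show ?thesis
      proof (cases "T0 z = 0")
        case True thus ?thesis using eq by simp
      next
        case False
        hence "inj_on z {1..Q}" using T0_inj unfolding T0_def by blast
        thus ?thesis using eq keysum[OF z] by simp
      qed
    qed
    thus ?thesis unfolding V_eval by (simp add: P_def c_def)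
  qed
  have Q1: "Q \<ge> 1" using assms(1) by simp
  have T0v: "T0 z = (if inj_on z {1..Q} then (\<alpha> - \<beta>) ^ card ?E else 0)" for z
    unfolding T0_def by (rule T0_val)
  have Ceq: "coeff (V_at (V_poly Q \<pi> \<alpha> \<beta>) \<alpha>) 1 = (real Q - 1) * (\<alpha> - \<beta>) ^ card ?E * (\<Sum>z\<in>?Z. if inj_on z {1..Q} then Pi z else 0)"
  proof -
    have "coeff (V_at (V_poly Q \<pi> \<alpha> \<beta>) \<alpha>) 1 = (\<Sum>z\<in>?Z. (real Q - 1) * (\<Sum>x\<in>?X. ?w z x * P x))"
      unfolding C_eval P_def by (simp add: sum_distrib_left algebra_simps)
    also have "\<dots> = (\<Sum>z\<in>?Z. (real Q - 1) * (\<alpha> - \<beta>) ^ card ?E * (if inj_on z {1..Q} then Pi z else 0))"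
      unfolding I0 T0v by (rule sum.cong[OF refl]) simp
    finally show ?thesis by (simp add: sum_distrib_left)
  qed
  define z0 where "z0 = (\<lambda>i\<in>{1..Q+1}. if i \<le> Q then i else 1)"
  have z0Z: "z0 \<in> ?Z" using Q1 by (auto simp: z0_def PiE_iff)
  have z0inj: "inj_on z0 {1..Q}" by (rule inj_onI) (simp add: z0_def)
  have z0pos: "Pi z0 > 0" unfolding Pi_def
    using assms(2) Q1 by (intro prod_pos) (auto simp: z0_def)
  have Spos: "(\<Sum>z\<in>?Z. if inj_on z {1..Q} then Pi z else 0) > 0"
  proof (rule sum_pos2[OF _ z0Z])
    show "finite ?Z" by (simp add: finite_PiE)
    show "0 < (if inj_on z0 {1..Q} then Pi z0 else 0)" using z0inj z0pos by simp
    fix z assume z: "z \<in> ?Z"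
    have "Pi z \<ge> 0" unfolding Pi_def
    proof (intro prod_nonneg)
      fix a assume "a \<in> {1..Q+1}"
      hence "z a \<in> {1..Q}" using z by (auto simp: PiE_iff)
      thus "0 \<le> \<pi> (z a)" using assms(2) by fastforce
    qed
    thus "0 \<le> (if inj_on z {1..Q} then Pi z else 0)" by simp
  qed
  have Ene: "card ?E \<noteq> 0"
  proof -
    have "(1,2) \<in> ?E" using assms(1) by (auto simp: aff_edges_def)
    thus ?thesis using finite_edges[of Q] by (auto simp: card_eq_0_iff)
  qed
  have Qr: "real Q - 1 \<noteq> 0" using assms(1) by simp
  have C: "coeff (V_at (V_poly Q \<pi> \<alpha> \<beta>) \<alpha>) 1 \<noteq> 0 \<longleftrightarrow> \<alpha> \<noteq> \<beta>"
    unfolding Ceq using Spos Qr Ene by auto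
  show ?thesis using U0 V0 C by blast
qed

end
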